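(* Let $p$ be an odd prime and let $1\le \ell\le p-1$ be such that the Legendre symbol $\left(\frac{4\ell+1}{p}\right)=-1$. Then for all $n\ge0$, $$b\big(2(pn+\ell)\big)\equiv 0\pmod 4.$$ Furthermore, for every odd prime $p$ and all $n,k\ge0$, $$b\!\left(2p^{2k+2}n+\frac{p^{2k+2}-1}{2}\right)\equiv (-1)^{\frac{(k+1)(p-1)}{2}}\,p^{k+1}\,b(2n)\pmod 4.$$
   Context: The mock theta function $\mathcal{B}(q)=\sum_{n\ge0}\frac{q^n(-q;q^2)_n}{(q;q^2)_{n+1}}=\sum_{n\ge0}b(n)q^n$, where $(a;q)_n=\prod_{j=0}^{n-1}(1-aq^j)$. (The paper writes the second congruence equivalently as $b(2n)\equiv(-1)^{\frac{(k+1)(1-p)}{2}}p^{-k-1}b(\cdot)\pmod 4$, with $p^{-1}$ the inverse of $p$ modulo $4$.) *)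

theory Defs
  imports "HOL-Computational_Algebra.Formal_Power_Series" "HOL-Number_Theory.Number_Theory"
begin

text \<open>q-Pochhammer symbol (a;q^2)_n as a formal power series over int, with a = c * q:
  prod_{j<n} (1 - c q^(2j+1)).\<close>
definition qpoch_odd :: "int \<Rightarrow> nat \<Rightarrow> int fps" where
  "qpoch_odd c n = (\<Prod>j<n. 1 - fps_const c * fps_X ^ (2*j+1))"

text \<open>The n-th summand q^n (-q;q^2)_n / (q;q^2)_(n+1). The denominator has constant
  coefficient 1, so fps_right_inverse of it with value 1 is its multiplicative inverse.\<close>
definition B_term :: "nat \<Rightarrow> int fps" where
  "B_term n = fps_X ^ n * qpoch_odd (-1) n * fps_right_inverse (qpoch_odd 1 (Suc n)) 1"

text \<open>b(m): coefficient of q^m in B(q). Since B_term n has valuation >= n, only the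
  summands with n <= m contribute.\<close>
definition b :: "nat \<Rightarrow> int" where
  "b m = (\<Sum>n\<le>m. fps_nth (B_term n) m)"

end

theory Submission
  imports Defs
begin

definition Uinv :: "int fps \<Rightarrow> int fps" where "Uinv f = fps_right_inverse f 1"

lemma Uinv_right: "fps_nth f 0 = 1 \<Longrightarrow> f * Uinv f = 1"
  by (simp add: Uinv_def fps_right_inverse)

lemma Uinv_unique: assumes "fps_nth f 0 = 1" "f * h = 1" shows "Uinv f = h"
proof -
  have "Uinv f = Uinv f * (f * h)" using assms by simp
  also have "\<dots> = (f * Uinv f) * h" by (simp add: algebra_simps)
  also have "\<dots> = h" using Uinv_right[OF assms(1)] by simp
  finally show ?thesis .
qed

lemma Uinv_mult: assumes "fps_nth f 0 = 1" "fps_nth g 0 = 1" shows "Uinv (f * g) = Uinv f * Uinv g"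
proof (rule Uinv_unique)
  show "fps_nth (f * g) 0 = 1" using assms by simp
  have "f * g * (Uinv f * Uinv g) = (f * Uinv f) * (g * Uinv g)" by (simp add: algebra_simps)
  then show "f * g * (Uinv f * Uinv g) = 1" using Uinv_right assms by simp
qed

lemma Uinv_one: "Uinv 1 = 1"
  by (rule Uinv_unique) auto

definition poch :: "int fps \<Rightarrow> int fps \<Rightarrow> nat \<Rightarrow> int fps" where
  "poch a Q k = (\<Prod>j<k. 1 - a * Q ^ j)"

definition G :: "int fps \<Rightarrow> int fps \<Rightarrow> int fps \<Rightarrow> int fps \<Rightarrow> nat \<Rightarrow> int fps" where
  "G a c t Q k = poch a Q k * t ^ k * Uinv (poch c Q k)"

definition P :: "int fps \<Rightarrow> int fps \<Rightarrow> int fps \<Rightarrow> int fps \<Rightarrow> nat \<Rightarrow> int fps" where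
  "P a c t Q K = (\<Sum>k<K. G a c t Q k)"

lemma poch_0: "poch a Q 0 = 1" by (simp add: poch_def)
lemma poch_Suc: "poch a Q (Suc k) = poch a Q k * (1 - a * Q ^ k)"
  by (simp add: poch_def)
lemma poch_Suc': "poch a Q (Suc k) = (1 - a) * poch (a * Q) Q k"
  unfolding poch_def prod.lessThan_Suc_shift by (simp add: mult.assoc)

lemma poch_nth0: assumes "fps_nth c 0 = 0" shows "fps_nth (poch c Q k) 0 = 1"
  by (induction k) (simp_all add: poch_0 poch_Suc assms)

lemma G_0: "G a c t Q 0 = 1" by (simp add: G_def poch_0 Uinv_one)

lemma S1: assumes "fps_nth c 0 = 0"
  shows "G a c t Q (Suc k) * (1 - c * Q ^ k) = t * (1 - a * Q ^ k) * G a c t Q k"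
proof -
  have h1: "fps_nth (1 - c * Q ^ k) 0 = 1" using assms by simp
  have "Uinv (poch c Q (Suc k)) = Uinv (poch c Q k) * Uinv (1 - c * Q ^ k)"
    unfolding poch_Suc by (rule Uinv_mult[OF poch_nth0[OF assms] h1])
  then have "G a c t Q (Suc k) * (1 - c * Q ^ k) =
     poch a Q k * (1 - a * Q ^ k) * t ^ Suc k * Uinv (poch c Q k) * ((1 - c * Q ^ k) * Uinv (1 - c * Q ^ k))"
    by (simp add: G_def poch_Suc ac_simps)
  also have "\<dots> = t * (1 - a * Q ^ k) * G a c t Q k"
    using Uinv_right[OF h1] by (simp add: G_def ac_simps)
  finally show ?thesis .
qed

lemma G_tQ: "G a c (t * Q) Q k = Q ^ k * G a c t Q k"
  by (simp add: G_def power_mult_distrib algebra_simps)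

lemma S2: assumes "fps_nth b' 0 = 0"
  shows "(1 - t) * P a (b' * Q) t Q K - (b' - a * t) * P a (b' * Q) (t * Q) Q K
     = (1 - b') - G a (b' * Q) t Q K * (1 - b' * Q ^ K)"
proof (induction K)
  case 0
  then show ?case by (simp add: P_def G_0)
next
  case (Suc K)
  have b0: "fps_nth (b' * Q) 0 = 0" using assms by simp
  have h: "G a (b' * Q) t Q (Suc K) * (1 - b' * Q ^ Suc K) = t * (1 - a * Q ^ K) * G a (b' * Q) t Q K"
    using S1[OF b0, of a t Q K] by (simp add: mult.assoc)
  have "(1 - t) * P a (b' * Q) t Q (Suc K) - (b' - a * t) * P a (b' * Q) (t * Q) Q (Suc K)
     = ((1 - t) * P a (b' * Q) t Q K - (b' - a * t) * P a (b' * Q) (t * Q) Q K)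
       + ((1 - t) * G a (b' * Q) t Q K - (b' - a * t) * (Q ^ K * G a (b' * Q) t Q K))"
    unfolding P_def sum.lessThan_Suc G_tQ by (simp add: algebra_simps)
  also have "\<dots> = (1 - b') - G a (b' * Q) t Q K * (1 - b' * Q ^ K)
       + ((1 - t) * G a (b' * Q) t Q K - (b' - a * t) * (Q ^ K * G a (b' * Q) t Q K))"
    using Suc by simp
  also have "\<dots> = (1 - b') - t * (1 - a * Q ^ K) * G a (b' * Q) t Q K"
    by (simp add: algebra_simps)
  also have "\<dots> = (1 - b') - G a (b' * Q) t Q (Suc K) * (1 - b' * Q ^ Suc K)"
    using h by simp
  finally show ?case .
qed

lemma S3: assumes "fps_nth c 0 = 0"
  shows "P a c (t * Q) Q (Suc K) = 1 + t * Q * (1 - a) * Uinv (1 - c) * P (a * Q) (c * Q) (t * Q) Q K"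
proof -
  have b0: "fps_nth (c * Q) 0 = 0" using assms by simp
  have t: "G a c (t * Q) Q (Suc k) = t * Q * (1 - a) * Uinv (1 - c) * G (a * Q) (c * Q) (t * Q) Q k" for k
  proof -
    have "Uinv (poch c Q (Suc k)) = Uinv (1 - c) * Uinv (poch (c * Q) Q k)"
      unfolding poch_Suc' by (rule Uinv_mult) (use assms poch_nth0[OF b0] in auto)
    then show ?thesis by (simp add: G_def poch_Suc' algebra_simps)
  qed
  show ?thesis
    unfolding P_def sum.lessThan_Suc_shift t G_0 by (simp add: sum_distrib_left)
qed


lemma level:
  assumes "fps_nth b' 0 = 0" "fps_nth Q 0 = 0" "fps_nth t 0 = 0"
  shows "P a (b' * Q) t Q (Suc K) = Uinv (1 - t) * (1 - a * t)
     - Uinv (1 - t) * (G a (b' * Q) t Q (Suc K) * (1 - b' * Q ^ Suc K))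
     + Uinv (1 - t) * (b' - a * t) * t * Q * (1 - a) * Uinv (1 - b' * Q) * P (a * Q) (b' * Q * Q) (t * Q) Q K"
proof -
  define E where "E = G a (b' * Q) t Q (Suc K) * (1 - b' * Q ^ Suc K)"
  define P' where "P' = P (a * Q) (b' * Q * Q) (t * Q) Q K"
  have c0: "fps_nth (b' * Q) 0 = 0" using assms by simp
  have e1: "(1 - t) * P a (b' * Q) t Q (Suc K) - (b' - a * t) * P a (b' * Q) (t * Q) Q (Suc K) = (1 - b') - E"
    unfolding E_def by (rule S2[OF assms(1)])
  have e2: "P a (b' * Q) (t * Q) Q (Suc K) = 1 + t * Q * (1 - a) * Uinv (1 - b' * Q) * P'"
    unfolding P'_def by (rule S3[OF c0])
  have e3: "(1 - t) * P a (b' * Q) t Q (Suc K) = (1 - a * t) - E + (b' - a * t) * t * Q * (1 - a) * Uinv (1 - b' * Q) * P'"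
    using e1 unfolding e2 by (simp add: algebra_simps)
  have u: "Uinv (1 - t) * (1 - t) = 1" using Uinv_right[of "1 - t"] assms by (simp add: mult.commute)
  have "P a (b' * Q) t Q (Suc K) = Uinv (1 - t) * ((1 - t) * P a (b' * Q) t Q (Suc K))"
    by (simp add: mult.assoc[symmetric] u)
  also have "\<dots> = Uinv (1 - t) * ((1 - a * t) - E + (b' - a * t) * t * Q * (1 - a) * Uinv (1 - b' * Q) * P')"
    by (simp only: e3)
  finally show ?thesis unfolding E_def P'_def by (simp add: algebra_simps)
qed

abbreviation X :: "int fps" where "X \<equiv> fps_X"

definition y :: "nat \<Rightarrow> int fps" where "y s = X ^ (2 * s + 1)"

definition Sp :: "nat \<Rightarrow> nat \<Rightarrow> int fps" where
  "Sp s K = P (- y s) (y s * X ^ 2) (y s) (X ^ 2) K"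

definition rho :: "nat \<Rightarrow> int fps" where
  "rho s = Uinv (1 - y s) * (1 - (- y s) * y s)"

definition lam :: "nat \<Rightarrow> int fps" where
  "lam s = Uinv (1 - y s) * (y s - (- y s) * y s) * y s * X ^ 2 * (1 - (- y s)) * Uinv (1 - y s * X ^ 2)"

definition Err :: "nat \<Rightarrow> nat \<Rightarrow> int fps" where
  "Err s K = Uinv (1 - y s) * (G (- y s) (y s * X ^ 2) (y s) (X ^ 2) (Suc K) * (1 - y s * (X ^ 2) ^ Suc K))"

lemma y_Suc: "y (Suc s) = y s * X ^ 2"
  by (simp add: y_def power_add[symmetric])

lemma level_sp: "Sp s (Suc K) = rho s - Err s K + lam s * Sp (Suc s) K"
proof -
  have h: "P (- y s) (y s * X ^ 2) (y s) (X ^ 2) (Suc K) = rho s - Err s K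
     + lam s * P (- y s * X ^ 2) (y s * X ^ 2 * X ^ 2) (y s * X ^ 2) (X ^ 2) K"
    unfolding rho_def Err_def lam_def
    by (rule level) (simp_all add: y_def)
  show ?thesis unfolding Sp_def h y_Suc by simp
qed

lemma X_dvd_Err: "X ^ Suc K dvd Err s K"
proof -
  have "X ^ Suc K dvd y s ^ Suc K"
    unfolding y_def power_mult[symmetric] by (rule le_imp_power_dvd) simp
  then show ?thesis unfolding Err_def G_def by (simp add: dvd_mult dvd_mult2)
qed

lemma X_dvd_lam: "X dvd lam s"
  unfolding lam_def by (simp add: dvd_mult dvd_mult2)

definition Lam :: "nat \<Rightarrow> int fps" where "Lam N = (\<Prod>j<N. lam j)"

lemma iter:
  "N \<le> K \<Longrightarrow> X ^ (K - N) dvd (Sp 0 K - (\<Sum>s<N. Lam s * rho s) - Lam N * Sp N (K - N))"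
proof (induction N)
  case 0
  then show ?case by (simp add: Lam_def)
next
  case (Suc N)
  define K' where "K' = K - Suc N"
  have KN: "K - N = Suc K'" using Suc.prems unfolding K'_def by simp
  have IH: "X ^ Suc K' dvd (Sp 0 K - (\<Sum>s<N. Lam s * rho s) - Lam N * Sp N (Suc K'))"
    using Suc by (simp add: KN)
  have eq: "Sp 0 K - (\<Sum>s<Suc N. Lam s * rho s) - Lam (Suc N) * Sp (Suc N) K'
     = (Sp 0 K - (\<Sum>s<N. Lam s * rho s) - Lam N * Sp N (Suc K')) - Lam N * Err N K'"
    unfolding level_sp by (simp add: Lam_def algebra_simps)
  have d1: "X ^ K' dvd (Sp 0 K - (\<Sum>s<N. Lam s * rho s) - Lam N * Sp N (Suc K'))"
    using IH by (rule dvd_trans[rotated]) (simp add: le_imp_power_dvd)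
  have d2: "X ^ K' dvd Lam N * Err N K'"
    using X_dvd_Err[of K' N] by (metis dvd_mult dvd_trans le_imp_power_dvd le_Suc_eq order_refl)
  show ?case unfolding eq K'_def[symmetric] using d1 d2 by (rule dvd_diff)
qed


lemma X_dvd_Lam: "X ^ N dvd Lam N"
proof -
  have "X ^ N = (\<Prod>j<N. X)" by simp
  also have "\<dots> dvd Lam N" unfolding Lam_def by (rule prod_dvd_prod) (rule X_dvd_lam)
  finally show ?thesis .
qed

lemma approx: "X ^ M dvd (Sp 0 (2 * M) - (\<Sum>s<M. Lam s * rho s))"
proof -
  have "X ^ (2 * M - M) dvd (Sp 0 (2 * M) - (\<Sum>s<M. Lam s * rho s) - Lam M * Sp M (2 * M - M))"
    by (rule iter) simp
  then have d1: "X ^ M dvd (Sp 0 (2 * M) - (\<Sum>s<M. Lam s * rho s) - Lam M * Sp M (2 * M - M))" by simp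
  have d2: "X ^ M dvd Lam M * Sp M (2 * M - M)" using X_dvd_Lam by (rule dvd_mult2)
  have "X ^ M dvd (Sp 0 (2 * M) - (\<Sum>s<M. Lam s * rho s) - Lam M * Sp M (2 * M - M)) + Lam M * Sp M (2 * M - M)"
    using d1 d2 by (rule dvd_add)
  then show ?thesis by simp
qed

lemma dvd_X_pow_nth: assumes "X ^ M dvd f" "m < M" shows "fps_nth f m = 0"
proof -
  obtain g where "f = X ^ M * g" using assms(1) by (auto elim: dvdE)
  then show ?thesis using assms(2) by (simp add: fps_X_power_mult_nth)
qed

lemma qpoch_m1: "qpoch_odd (-1) n = poch (- y 0) (X ^ 2) n"
  unfolding qpoch_odd_def poch_def y_def
  by (rule prod.cong) (simp_all add: power_mult[symmetric] power_Suc2 fps_const_neg[symmetric])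

lemma Xpow_aux: "X * X ^ 2 * (X ^ 2) ^ i = X ^ (2 * Suc i + 1)"
proof -
  have "X * X ^ 2 * (X ^ 2) ^ i = X ^ (1 + 2 + 2 * i)"
    by (simp only: power_add power_mult power_one_right)
  also have "1 + 2 + 2 * i = 2 * Suc i + 1" by simp
  finally show ?thesis .
qed

lemma qpoch_1: "qpoch_odd 1 (Suc n) = (1 - X) * poch (y 0 * X ^ 2) (X ^ 2) n"
  unfolding qpoch_odd_def poch_def y_def prod.lessThan_Suc_shift
  by (simp add: Xpow_aux)

lemma B_term_G: "B_term n = Uinv (1 - X) * G (- y 0) (y 0 * X ^ 2) (y 0) (X ^ 2) n"
proof -
  have "Uinv (qpoch_odd 1 (Suc n)) = Uinv (1 - X) * Uinv (poch (y 0 * X ^ 2) (X ^ 2) n)"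
    unfolding qpoch_1 by (rule Uinv_mult) (simp_all add: poch_nth0 y_def)
  then show ?thesis
    unfolding B_term_def G_def Uinv_def[symmetric] qpoch_m1 by (simp add: y_def ac_simps)
qed

lemma B_term_nth: "m < n \<Longrightarrow> fps_nth (B_term n) m = 0"
  unfolding B_term_def by (simp add: mult.assoc fps_X_power_mult_nth)

lemma b_Sp: assumes "m < K" shows "b m = fps_nth (Uinv (1 - X) * Sp 0 K) m"
proof -
  have "b m = (\<Sum>n<K. fps_nth (B_term n) m)"
    unfolding b_def by (rule sum.mono_neutral_left) (use assms B_term_nth in auto)
  also have "\<dots> = fps_nth (Uinv (1 - X) * Sp 0 K) m"
    by (simp add: Sp_def P_def B_term_G fps_sum_nth sum_distrib_left)
  finally show ?thesis .
qed

definition C :: "nat \<Rightarrow> int fps" where "C s = Uinv (1 - X) * Lam s * rho s"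

lemma b_C: "b m = (\<Sum>s<Suc m. fps_nth (C s) m)"
proof -
  have "b m = fps_nth (Uinv (1 - X) * Sp 0 (2 * Suc m)) m" by (rule b_Sp) simp
  also have "\<dots> = fps_nth (Uinv (1 - X) * (\<Sum>s<Suc m. Lam s * rho s)) m"
  proof -
    have "X ^ Suc m dvd Uinv (1 - X) * (Sp 0 (2 * Suc m) - (\<Sum>s<Suc m. Lam s * rho s))"
      using approx by (rule dvd_mult)
    then have "fps_nth (Uinv (1 - X) * (Sp 0 (2 * Suc m) - (\<Sum>s<Suc m. Lam s * rho s))) m = 0"
      by (rule dvd_X_pow_nth) simp
    then show ?thesis by (simp add: algebra_simps)
  qed
  also have "\<dots> = (\<Sum>s<Suc m. fps_nth (C s) m)"
    unfolding sum_distrib_left fps_sum_nth C_def by (simp add: mult.assoc)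
  finally show ?thesis .
qed


lemma fps_nth_numeral_mult: "fps_nth (numeral k * f) i = numeral k * fps_nth (f :: int fps) i"
  by (simp add: numeral_fps_const)

lemma dvd4_nth: assumes "(4 :: int fps) dvd (f - g)" shows "[fps_nth f i = fps_nth g i] (mod 4)"
proof -
  obtain h where "f - g = 4 * h" using assms by (auto elim: dvdE)
  then have "fps_nth f i - fps_nth g i = 4 * fps_nth h i"
    by (metis fps_nth_numeral_mult fps_sub_nth)
  then show ?thesis by (simp add: cong_iff_dvd_diff)
qed

lemma prod_dvd4:
  fixes f g :: "nat \<Rightarrow> int fps"
  assumes "\<And>j. j \<in> A \<Longrightarrow> 4 dvd (f j - g j)" "finite A"
  shows "4 dvd (prod f A - prod g A)"
  using assms(2,1)
proof (induction A rule: finite_induct)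
  case empty
  then show ?case by simp
next
  case (insert x F)
  have "prod f (insert x F) - prod g (insert x F) = f x * (prod f F - prod g F) + (f x - g x) * prod g F"
    using insert.hyps by (simp add: algebra_simps)
  moreover have "4 dvd f x * (prod f F - prod g F)" using insert by (simp add: dvd_mult)
  moreover have "4 dvd (f x - g x) * prod g F" using insert by (simp add: dvd_mult2)
  ultimately show ?case by simp
qed

definition u :: "nat \<Rightarrow> int fps" where "u j = Uinv (1 - y j)"

lemma y_nth0: "fps_nth (y j) 0 = 0" by (simp add: y_def)

lemma u_right: "(1 - y j) * u j = 1"
  unfolding u_def by (rule Uinv_right) (simp add: y_nth0)

definition e :: "nat \<Rightarrow> int fps" where "e s = (\<Prod>j<s. y j ^ 2 * X ^ 2)"

lemma lam_alt: "lam s = y s ^ 2 * X ^ 2 * (1 + y s) ^ 2 * u s * u (Suc s)"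
  unfolding lam_def u_def y_Suc by (simp add: power2_eq_square algebra_simps)

lemma F1: "Uinv (1 - X) * Lam s = e s * (\<Prod>j<s. (1 + y j) ^ 2) * (\<Prod>j<s. u j) * (\<Prod>j<Suc s. u j)"
proof (induction s)
  case 0
  then show ?case by (simp add: Lam_def e_def u_def y_def)
next
  case (Suc s)
  have "Uinv (1 - X) * Lam (Suc s) = (Uinv (1 - X) * Lam s) * lam s"
    by (simp add: Lam_def ac_simps)
  also have "\<dots> = e (Suc s) * (\<Prod>j<Suc s. (1 + y j) ^ 2) * (\<Prod>j<Suc s. u j) * (\<Prod>j<Suc (Suc s). u j)"
    unfolding Suc lam_alt by (simp add: e_def ac_simps)
  finally show ?case .
qed

lemma F3: "(\<Prod>j<s. (1 - y j) ^ 2) * (\<Prod>j<s. u j) * (\<Prod>j<Suc s. u j) = u s"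
proof -
  have "(\<Prod>j<s. (1 - y j) * u j) = 1" by (simp add: u_right)
  then have "(\<Prod>j<s. (1 - y j)) * (\<Prod>j<s. u j) = 1" by (simp add: prod.distrib)
  then have "((\<Prod>j<s. (1 - y j)) * (\<Prod>j<s. u j)) ^ 2 * u s = u s" by simp
  then show ?thesis by (simp add: power2_eq_square prod.distrib[symmetric] ac_simps)
qed

lemma F2: "4 dvd ((\<Prod>j<s. (1 + y j) ^ 2) - (\<Prod>j<s. (1 - y j) ^ 2))"
proof (rule prod_dvd4)
  fix j
  have "(1 + y j) ^ 2 - (1 - y j) ^ 2 = 4 * y j" by (simp add: power2_eq_square algebra_simps)
  then show "4 dvd ((1 + y j) ^ 2 - (1 - y j) ^ 2)" by simp
qed simp

lemma C_mod4: "4 dvd (C s - e s * u s ^ 2 * (1 + y s ^ 2))"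
proof -
  define A where "A = (\<Prod>j<s. (1 + y j) ^ 2)"
  define A' where "A' = (\<Prod>j<s. (1 - y j) ^ 2)"
  define R where "R = (\<Prod>j<s. u j) * (\<Prod>j<Suc s. u j)"
  have rho: "rho s = u s * (1 + y s ^ 2)" unfolding rho_def u_def by (simp add: power2_eq_square)
  have "C s = e s * A * R * rho s" unfolding C_def F1 A_def R_def by (simp add: ac_simps)
  moreover have AR: "A' * R = u s" unfolding A'_def R_def using F3 by (simp add: ac_simps)
  moreover have "A' * (e s * R * rho s) = e s * (A' * R) * rho s" by (simp add: ac_simps)
  ultimately have "C s - e s * u s ^ 2 * (1 + y s ^ 2) = (A - A') * (e s * R * rho s)"
    unfolding AR by (simp add: rho power2_eq_square algebra_simps)
  moreover have "4 dvd (A - A')" unfolding A_def A'_def by (rule F2)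
  ultimately show ?thesis by simp
qed


definition vv :: "nat \<Rightarrow> nat \<Rightarrow> int" where
  "vv d i = (if d dvd i then int (i div d) + 1 else 0)"

lemma vv_rec:
  assumes d: "0 < d"
  shows "vv d i - 2 * (if i < d then 0 else vv d (i - d)) + (if i < 2 * d then 0 else vv d (i - 2 * d))
     = (if i = 0 then 1 else 0)"
proof (cases "d dvd i")
  case True
  then obtain j where i: "i = d * j" by (auto elim: dvdE)
  consider "j = 0" | "j = 1" | "j \<ge> 2" by linarith
  then show ?thesis
  proof cases
    case 1
    then show ?thesis using i d by (simp add: vv_def)
  next
    case 2
    then show ?thesis using i d by (simp add: vv_def)
  next
    case 3
    have a: "i - d = d * (j - 1)" using i by (simp add: diff_mult_distrib2)
    have b: "i - 2 * d = d * (j - 2)" using i by (simp add: diff_mult_distrib2)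
    have "\<not> i < 2 * d" using 3 i d by (metis mult.commute mult_le_mono1 not_less)
    moreover have "\<not> i < d" using calculation by linarith
    moreover have "i \<noteq> 0" using 3 i d by simp
    moreover have "vv d i = int j + 1" unfolding vv_def i using d by simp
    moreover have "vv d (i - d) = int j" unfolding a vv_def using d 3 by (simp add: of_nat_diff)
    moreover have "vv d (i - 2 * d) = int j - 1" unfolding b vv_def using d 3 by (simp add: of_nat_diff)
    ultimately show ?thesis by simp
  qed
next
  case False
  have a: "\<not> d dvd (i - d)" if "\<not> i < d"
  proof
    assume h: "d dvd (i - d)"
    have "i = (i - d) + d" using that by simp
    also have "d dvd \<dots>" using h by simp
    finally show False using False by simp
  qed
  have b: "\<not> d dvd (i - 2 * d)" if "\<not> i < 2 * d"
  proof
    assume h: "d dvd (i - 2 * d)"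
    have "i = (i - 2 * d) + 2 * d" using that by simp
    also have "d dvd \<dots>" using h by simp
    finally show False using False by simp
  qed
  have "i \<noteq> 0" using False by (metis dvd_0_right)
  then show ?thesis using False a b by (simp add: vv_def)
qed

definition V :: "nat \<Rightarrow> int fps" where "V s = Abs_fps (vv (2 * s + 1))"

lemma V_inv: "(1 - y s) ^ 2 * V s = 1"
proof -
  define d where "d = 2 * s + 1"
  have yy: "y s * y s = X ^ (2 * d)" by (simp add: y_def d_def mult_2 power_add)
  have eq: "(1 - y s) ^ 2 * V s = V s - 2 * (X ^ d * V s) + X ^ (2 * d) * V s"
    unfolding yy[symmetric] by (simp add: power2_eq_square y_def d_def algebra_simps)
  have Vd: "V s = Abs_fps (vv d)" by (simp add: V_def d_def)
  have d0: "0 < d" by (simp add: d_def)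
  show ?thesis
  proof (rule fps_ext)
    fix i
    have "fps_nth ((1 - y s) ^ 2 * V s) i = vv d i - 2 * (if i < d then 0 else vv d (i - d))
       + (if i < 2 * d then 0 else vv d (i - 2 * d))"
      unfolding eq unfolding Vd by (simp add: fps_nth_numeral_mult fps_X_power_mult_nth)
    also have "\<dots> = fps_nth 1 i" unfolding vv_rec[OF d0] by simp
    finally show "fps_nth ((1 - y s) ^ 2 * V s) i = fps_nth 1 i" .
  qed
qed

lemma u_sq: "u s ^ 2 = V s"
proof -
  have "u s ^ 2 = u s ^ 2 * ((1 - y s) ^ 2 * V s)" by (simp add: V_inv)
  also have "\<dots> = ((1 - y s) * u s) ^ 2 * V s" by (simp add: power_mult_distrib ac_simps)
  finally show ?thesis by (simp add: u_right)
qed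

lemma e_eq: "e s = X ^ (2 * s * (s + 1))"
proof (induction s)
  case 0
  then show ?case by (simp add: e_def)
next
  case (Suc s)
  have "e (Suc s) = X ^ (2 * s * (s + 1)) * (X ^ (2 * s + 1)) ^ 2 * X ^ 2"
    using Suc by (simp add: e_def y_def)
  also have "\<dots> = X ^ (2 * s * (s + 1) + (2 * s + 1) * 2 + 2)"
    by (simp only: power_add power_mult)
  also have "2 * s * (s + 1) + (2 * s + 1) * 2 + 2 = 2 * Suc s * (Suc s + 1)"
    by (simp add: algebra_simps)
  finally show ?case .
qed

lemma W:
  assumes "odd d" "even i"
  shows "[vv d i + (if i < 2 * d then 0 else vv d (i - 2 * d)) = (if i = 0 then 1 else 0)] (mod 4)"
proof (cases "d dvd i")
  case True
  then obtain j where i: "i = d * j" by (auto elim: dvdE)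
  have d0: "d > 0" using assms by (auto intro: odd_pos)
  have ej: "even j" using assms i by auto
  show ?thesis
  proof (cases "j = 0")
    case True
    then show ?thesis using i d0 by (simp add: vv_def)
  next
    case False
    then have j2: "j \<ge> 2" using ej by (auto elim!: evenE)
    have b: "i - 2 * d = d * (j - 2)" using i by (simp add: diff_mult_distrib2)
    have "\<not> i < 2 * d" using j2 i d0 by (metis mult.commute mult_le_mono1 not_less)
    moreover have "i \<noteq> 0" using j2 i d0 by simp
    moreover have "vv d i = int j + 1" unfolding vv_def i using d0 by simp
    moreover have "vv d (i - 2 * d) = int j - 1" unfolding b vv_def using d0 j2 by (simp add: of_nat_diff)
    ultimately have val: "vv d i + (if i < 2 * d then 0 else vv d (i - 2 * d)) = 2 * int j"
      by simp
    have "[2 * int j = 0] (mod 4)" using ej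
      by (auto elim!: evenE simp: cong_iff_dvd_diff)
    then show ?thesis unfolding val using \<open>i \<noteq> 0\<close> by simp
  qed
next
  case False
  have b: "\<not> d dvd (i - 2 * d)" if "\<not> i < 2 * d"
  proof
    assume h: "d dvd (i - 2 * d)"
    have "i = (i - 2 * d) + 2 * d" using that by simp
    also have "d dvd \<dots>" using h by simp
    finally show False using False by simp
  qed
  have "i \<noteq> 0" using False by (metis dvd_0_right)
  then show ?thesis using False b by (simp add: vv_def)
qed

lemma C_nth: "[fps_nth (C s) (2 * m) = (if m = s * (s + 1) then 1 else 0)] (mod 4)"
proof -
  define E where "E = 2 * s * (s + 1)"
  define d where "d = 2 * s + 1"
  have yy: "y s ^ 2 = X ^ (2 * d)" unfolding y_def d_def by (simp only: power_mult[symmetric] mult.commute)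
  have Vd: "V s = Abs_fps (vv d)" by (simp add: V_def d_def)
  have c1: "[fps_nth (C s) (2 * m) = fps_nth (e s * u s ^ 2 * (1 + y s ^ 2)) (2 * m)] (mod 4)"
    using C_mod4 by (rule dvd4_nth)
  have c2: "e s * u s ^ 2 * (1 + y s ^ 2) = X ^ E * (V s + X ^ (2 * d) * V s)"
    unfolding e_eq u_sq yy E_def by (simp add: algebra_simps)
  have c3: "[fps_nth (X ^ E * (V s + X ^ (2 * d) * V s)) (2 * m) = (if m = s * (s + 1) then 1 else 0)] (mod 4)"
  proof (cases "2 * m < E")
    case True
    then have "m \<noteq> s * (s + 1)" unfolding E_def by auto
    then show ?thesis using True by (simp add: fps_X_power_mult_nth)
  next
    case False
    define i where "i = 2 * m - E"
    have ev: "even i" unfolding i_def E_def by simp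
    have iff: "i = 0 \<longleftrightarrow> m = s * (s + 1)" using False unfolding i_def E_def by auto
    have "fps_nth (X ^ E * (V s + X ^ (2 * d) * V s)) (2 * m)
        = vv d i + (if i < 2 * d then 0 else vv d (i - 2 * d))"
      using False unfolding Vd by (simp add: fps_X_power_mult_nth i_def)
    then show ?thesis using W[of d i] ev iff by (simp add: d_def)
  qed
  show ?thesis using cong_trans[OF c1 c3[folded c2]] .
qed

lemma b_even: "[b (2 * m) = (if \<exists>s. m = s * (s + 1) then 1 else 0)] (mod 4)"
proof -
  have "[b (2 * m) = (\<Sum>s<Suc (2 * m). (if m = s * (s + 1) then 1 else 0))] (mod 4)"
    unfolding b_C by (rule cong_sum) (rule C_nth)
  moreover have "(\<Sum>s<Suc (2 * m). (if m = s * (s + 1) then 1 else 0 :: int))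
      = (if \<exists>s. m = s * (s + 1) then 1 else 0)"
  proof (cases "\<exists>s. m = s * (s + 1)")
    case True
    then obtain s0 where s0: "m = s0 * (s0 + 1)" by blast
    have uniq: "m = s * (s + 1) \<longleftrightarrow> s = s0" for s
    proof
      assume h: "m = s * (s + 1)"
      show "s = s0"
      proof (rule ccontr)
        assume "s \<noteq> s0"
        then consider "s < s0" | "s0 < s" by linarith
        then show False
        proof cases
          case 1
          then have "s * (s + 1) < s0 * (s0 + 1)" by (intro mult_strict_mono) auto
          then show False using h s0 by simp
        next
          case 2
          then have "s0 * (s0 + 1) < s * (s + 1)" by (intro mult_strict_mono) auto
          then show False using h s0 by simp
        qed
      qed
    qed (simp add: s0)
    have lt: "s0 < Suc (2 * m)" using s0 by (cases s0) auto
    have "(\<Sum>s<Suc (2 * m). (if m = s * (s + 1) then 1 else 0 :: int))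
        = (\<Sum>s<Suc (2 * m). (if s = s0 then 1 else 0 :: int))"
      by (rule sum.cong) (simp_all only: uniq)
    also have "\<dots> = 1" using lt by simp
    finally show ?thesis using True by simp
  next
    case False
    then show ?thesis by auto
  qed
  ultimately show ?thesis by simp
qed


lemma part1:
  assumes "Legendre (int (4 * l + 1)) (int p) = -1"
  shows "[b (2 * (p * n + l)) = 0] (mod 4)"
proof -
  have "\<not> (\<exists>s. p * n + l = s * (s + 1))"
  proof
    assume "\<exists>s. p * n + l = s * (s + 1)"
    then obtain s where s: "p * n + l = s * (s + 1)" by blast
    have "(int (2 * s + 1)) ^ 2 = int (4 * (s * (s + 1)) + 1)"
      by (simp add: power2_eq_square algebra_simps)
    also have "\<dots> = int (4 * l + 1) + int p * (4 * int n)"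
      unfolding s[symmetric] by (simp add: algebra_simps)
    finally have eq: "(int (2 * s + 1)) ^ 2 = int (4 * l + 1) + int p * (4 * int n)" .
    have "[(int (2 * s + 1)) ^ 2 = int (4 * l + 1)] (mod int p)"
      unfolding eq cong_def by simp
    then have q: "QuadRes (int p) (int (4 * l + 1))" unfolding QuadRes_def by blast
    have "Legendre (int (4 * l + 1)) (int p) = (if [int (4 * l + 1) = 0] (mod int p) then 0 else 1)"
      unfolding Legendre_def if_P[OF q] ..
    then show False using assms by (simp split: if_splits)
  qed
  then show ?thesis using b_even[of "p * n + l"] by simp
qed

lemma sq_equiv:
  fixes P n r :: nat
  assumes P: "P = 2 * r + 1"
  shows "(\<exists>s. P ^ 2 * n + r * (r + 1) = s * (s + 1)) \<longleftrightarrow> (\<exists>t. n = t * (t + 1))"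
proof
  assume "\<exists>t. n = t * (t + 1)"
  then obtain t where t: "n = t * (t + 1)" by blast
  have "P ^ 2 * n + r * (r + 1) = (2 * r * t + r + t) * (2 * r * t + r + t + 1)"
    unfolding t P by (simp add: power2_eq_square algebra_simps)
  then show "\<exists>s. P ^ 2 * n + r * (r + 1) = s * (s + 1)" by blast
next
  assume "\<exists>s. P ^ 2 * n + r * (r + 1) = s * (s + 1)"
  then obtain s where s: "P ^ 2 * n + r * (r + 1) = s * (s + 1)" by blast
  have key: "(2 * s + 1) ^ 2 = P ^ 2 * (4 * n + 1)"
  proof -
    have "(2 * s + 1) ^ 2 = 4 * (s * (s + 1)) + 1" by (simp add: power2_eq_square algebra_simps)
    also have "\<dots> = 4 * (P ^ 2 * n + r * (r + 1)) + 1" unfolding s ..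
    also have "\<dots> = P ^ 2 * (4 * n + 1)" unfolding P by (simp add: power2_eq_square algebra_simps)
    finally show ?thesis .
  qed
  then have "P ^ 2 dvd (2 * s + 1) ^ 2" by simp
  then have "P dvd 2 * s + 1" by (simp add: pow_divides_pow_iff)
  then obtain w where w: "2 * s + 1 = P * w" by (auto elim: dvdE)
  have Ppos: "P > 0" using P by simp
  have "P ^ 2 * w ^ 2 = P ^ 2 * (4 * n + 1)" using key unfolding w by (simp add: power_mult_distrib)
  moreover have "P ^ 2 \<noteq> 0" using Ppos by simp
  ultimately have w2: "w ^ 2 = 4 * n + 1" by (metis mult_left_cancel)
  then have "odd (w ^ 2)" by simp
  then have "odd w" by simp
  then obtain t where wt: "w = 2 * t + 1" by (auto elim: oddE)
  have "4 * (t * (t + 1)) + 1 = 4 * n + 1" using w2 unfolding wt by (simp add: power2_eq_square algebra_simps)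
  then have "n = t * (t + 1)" by simp
  then show "\<exists>t. n = t * (t + 1)" by blast
qed

lemma sign_cong:
  fixes p :: nat
  assumes "odd p"
  shows "[(-1) ^ ((k + 1) * (p - 1) div 2) * int p ^ (k + 1) = 1] (mod 4)"
proof -
  define h where "h = (p - 1) div 2"
  have pe: "p - 1 = 2 * h" unfolding h_def using assms by simp
  have ex: "(k + 1) * (p - 1) div 2 = (k + 1) * h" unfolding pe by simp
  have base: "[(-1) ^ h * int p = 1] (mod 4)"
  proof (cases "even h")
    case True
    then obtain q where "h = 2 * q" by (auto elim: evenE)
    moreover have "p \<ge> 1" using odd_pos[OF assms] by simp
    ultimately have "p = 4 * q + 1" using pe by linarith
    then have "int p = 4 * int q + 1" by simp
    then show ?thesis using True by (simp add: cong_iff_dvd_diff)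
  next
    case False
    then obtain q where q: "h = 2 * q + 1" by (auto elim: oddE)
    moreover have "p \<ge> 1" using odd_pos[OF assms] by simp
    ultimately have "p = 4 * q + 3" using pe by linarith
    then have "int p = 4 * int q + 3" by simp
    then show ?thesis using False by (simp add: cong_iff_dvd_diff)
  qed
  have cpow: "[((-1) ^ h * int p) ^ (k + 1) = 1] (mod 4)" using cong_pow[OF base, of "k + 1"] by simp
  have eqv: "(-1) ^ ((k + 1) * h) * int p ^ (k + 1) = ((-1) ^ h * int p) ^ (k + 1)"
    by (simp only: power_mult_distrib mult.commute[of "k + 1" h] power_mult)
  show ?thesis unfolding ex eqv by (rule cpow)
qed

theorem theorem1p5:
  fixes p :: nat
  assumes "prime p" and "odd p"
  shows "(\<forall>l n. 1 \<le> l \<and> l \<le> p - 1 \<and> Legendre (int (4*l+1)) (int p) = -1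
            \<longrightarrow> [b (2*(p*n+l)) = 0] (mod 4))
       \<and> (\<forall>n k. [b (2 * p^(2*k+2) * n + (p^(2*k+2) - 1) div 2)
                 = (-1)^((k+1)*(p-1) div 2) * int p^(k+1) * b (2*n)] (mod 4))"
proof (intro conjI allI impI)
  fix l n
  assume "1 \<le> l \<and> l \<le> p - 1 \<and> Legendre (int (4*l+1)) (int p) = -1"
  then show "[b (2*(p*n+l)) = 0] (mod 4)" using part1 by blast
next
  fix n k
  define P where "P = p ^ (k + 1)"
  have oP: "odd P" unfolding P_def using assms(2) by simp
  then obtain r where r: "P = 2 * r + 1" by (auto elim: oddE)
  have e2: "2 * k + 2 = (k + 1) * 2" by simp
  have pp: "p ^ (2 * k + 2) = P ^ 2" unfolding P_def e2 by (rule power_mult)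
  have idx: "2 * p ^ (2 * k + 2) * n + (p ^ (2 * k + 2) - 1) div 2 = 2 * (P ^ 2 * n + r * (r + 1))"
  proof -
    have "P ^ 2 - 1 = 2 * (2 * (r * (r + 1)))" unfolding r by (simp add: power2_eq_square algebra_simps)
    then show ?thesis unfolding pp by simp
  qed
  define v :: int where "v = (if \<exists>t. n = t * (t + 1) then 1 else 0)"
  have c1: "[b (2 * p ^ (2 * k + 2) * n + (p ^ (2 * k + 2) - 1) div 2) = v] (mod 4)"
    unfolding idx v_def using b_even[of "P ^ 2 * n + r * (r + 1)"] sq_equiv[OF r, of n] by simp
  have c2: "[b (2 * n) = v] (mod 4)" unfolding v_def by (rule b_even)
  define c :: int where "c = (-1) ^ ((k + 1) * (p - 1) div 2) * int p ^ (k + 1)"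
  have cc: "[c = 1] (mod 4)" unfolding c_def by (rule sign_cong[OF assms(2)])
  have c3: "[v = c * v] (mod 4)"
  proof (cases "v = 0")
    case True then show ?thesis by simp
  next
    case False
    then have "v = 1" unfolding v_def by (auto split: if_splits)
    then show ?thesis using cong_sym[OF cc] by simp
  qed
  have c4: "[c * v = c * b (2 * n)] (mod 4)" by (rule cong_mult[OF cong_refl cong_sym[OF c2]])
  show "[b (2 * p ^ (2 * k + 2) * n + (p ^ (2 * k + 2) - 1) div 2)
                 = (-1)^((k+1)*(p-1) div 2) * int p^(k+1) * b (2*n)] (mod 4)"
    using cong_trans[OF cong_trans[OF c1 c3] c4] unfolding c_def .
qed

end
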